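(* There exists $0<\eta\le 1$ such that, for each sufficiently large integer $k$, there exists a pair $(p_k,q_k)$ of homogeneous polynomials of degree $k$ in two complex variables such that the map $(p_k,q_k):\mathbb{C}^2\to\mathbb{C}^2$ takes the unit sphere $S^3\subset\mathbb{C}^2$ into the annulus $\{w\in\mathbb{C}^2:\sqrt{\eta}\le |w|\le 1\}$. *)

theory Defs
  imports Complex_Main
begin

definition hom_poly2 :: "nat \<Rightarrow> (complex \<Rightarrow> complex \<Rightarrow> complex) \<Rightarrow> bool" where
  "hom_poly2 k P \<longleftrightarrow> (\<exists>a :: nat \<Rightarrow> complex. \<forall>z1 z2. P z1 z2 = (\<Sum>j\<le>k. a j * z1 ^ j * z2 ^ (k - j)))"

definition norm2 :: "complex \<Rightarrow> complex \<Rightarrow> real" where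
  "norm2 z1 z2 = sqrt ((cmod z1)\<^sup>2 + (cmod z2)\<^sup>2)"

end

theory Submission
  imports Defs
begin

lemma cos_ge_quad: "1 - x^2/2 \<le> cos (x::real)"
proof -
  have nn: "1 - y^2/2 \<le> cos y" if "y \<ge> 0" for y :: real
  proof -
    let ?f = "\<lambda>x::real. cos x - 1 + x^2/2"
    have "?f 0 \<le> ?f y"
    proof (rule DERIV_nonneg_imp_nondecreasing[OF that])
      fix u :: real assume "0 \<le> u" "u \<le> y"
      have "DERIV ?f u :> (- sin u + u)"
        by (auto intro!: derivative_eq_intros)
      then show "\<exists>d. DERIV ?f u :> d \<and> d \<ge> 0"
        using sin_x_le_x[OF \<open>0 \<le> u\<close>] by auto
    qed
    then show ?thesis by simp
  qed
  show ?thesis using nn[of x] nn[of "-x"] by (cases "x \<ge> 0") auto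
qed

lemma sin_ge_cubic: assumes "(0::real) \<le> y" shows "y - y^3/6 \<le> sin y"
proof -
  let ?f = "\<lambda>x::real. sin x - x + x^3/6"
  have "?f 0 \<le> ?f y"
  proof (rule DERIV_nonneg_imp_nondecreasing[OF assms])
    fix u :: real assume "0 \<le> u" "u \<le> y"
    have "DERIV ?f u :> (cos u - 1 + u^2/2)"
      by (auto intro!: derivative_eq_intros simp: power2_eq_square)
    then show "\<exists>d. DERIV ?f u :> d \<and> d \<ge> 0"
      using cos_ge_quad[of u] by auto
  qed
  then show ?thesis by simp
qed

lemma cos_le_quad: assumes "\<bar>x\<bar> \<le> pi/2" shows "cos (x::real) \<le> 1 - x^2/3"
proof -
  define y where "y = \<bar>x\<bar>/2"
  have y0: "0 \<le> y" and y1: "y \<le> pi/4" using assms by (auto simp: y_def)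
  have "y^2 \<le> (pi/4)^2" using y0 y1 by (intro power_mono) auto
  also have "\<dots> \<le> 1" using pi_less_4 pi_gt_zero by (simp add: power_le_one)
  finally have yy: "y^2 \<le> 1" .
  have "y - y^3/6 \<le> sin y" by (rule sin_ge_cubic[OF y0])
  moreover have "y - y^3/6 = y * (1 - y^2/6)" by (simp add: power2_eq_square power3_eq_cube algebra_simps)
  moreover have "(5/6) * y \<le> y * (1 - y^2/6)"
  proof -
    have "y * y^2 \<le> y * 1" by (rule mult_left_mono[OF yy y0])
    then show ?thesis by (simp add: algebra_simps)
  qed
  ultimately have s: "(5/6) * y \<le> sin y" by linarith
  have s2: "(25/36) * y^2 \<le> (sin y)^2"
  proof -
    have "((5/6) * y)^2 \<le> (sin y)^2" using s y0 by (intro power_mono) auto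
    then show ?thesis by (simp add: power2_eq_square)
  qed
  have c: "cos x = 1 - 2 * (sin y)^2"
  proof -
    have "cos x = cos \<bar>x\<bar>" by (cases "x \<ge> 0") auto
    also have "\<bar>x\<bar> = 2 * y" by (simp add: y_def)
    finally show ?thesis by (simp add: cos_double_sin)
  qed
  have xx: "x^2 = 4 * y^2"
  proof -
    have "x^2 = \<bar>x\<bar>^2" by simp
    also have "\<bar>x\<bar> = 2 * y" by (simp add: y_def)
    finally show ?thesis by simp
  qed
  show ?thesis using s2 c xx zero_le_power2[of y] by linarith
qed

lemma ln_lower_m:
  fixes u m :: real
  assumes m0: "0 < m" and m1: "m \<le> 1" and mu: "m \<le> 1 + u"
  shows "u - u^2/(2*m) \<le> ln (1 + u)"
proof -
  define c where "c = 1/(2*m)"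
  let ?g = "\<lambda>x::real. ln (1 + x) - x + (x*x)*c"
  have der: "DERIV ?g x :> (x * (1/m - 1/(1+x)))" if "m \<le> 1 + x" for x
  proof -
    have "1 + x > 0" using that m0 by linarith
    have "DERIV ?g x :> (1/(1+x) - 1 + (x+x)*c)"
      using \<open>1 + x > 0\<close> by (auto intro!: derivative_eq_intros simp: divide_inverse)
    moreover have "1/(1+x) - 1 + (x+x)*c = x * (1/m - 1/(1+x))"
      using \<open>1 + x > 0\<close> m0 by (simp add: c_def field_simps)
    ultimately show ?thesis by simp
  qed
  have gform: "?g v = ln (1 + v) - v + v^2/(2*m)" for v by (simp add: c_def power2_eq_square)
  show ?thesis
  proof (cases "u \<ge> 0")
    case True
    have "?g 0 \<le> ?g u"
    proof (rule DERIV_nonneg_imp_nondecreasing[OF True])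
      fix x :: real assume x: "0 \<le> x" "x \<le> u"
      have "m \<le> 1 + x" using m1 x by linarith
      moreover have "1/(1+x) \<le> 1/m" using m0 \<open>m \<le> 1 + x\<close> by (intro divide_left_mono) auto
      ultimately show "\<exists>d. DERIV ?g x :> d \<and> d \<ge> 0"
        using der x by (intro exI[of _ "x * (1/m - 1/(1+x))"]) auto
    qed
    then show ?thesis using gform[of u] by simp
  next
    case False
    have "?g u \<ge> ?g 0"
    proof (rule DERIV_nonpos_imp_nonincreasing[of u 0 ?g])
      show "u \<le> 0" using False by simp
    next
      fix x :: real assume x: "u \<le> x" "x \<le> 0"
      have "m \<le> 1 + x" using mu x by linarith
      moreover have "1/(1+x) \<le> 1/m" using m0 \<open>m \<le> 1 + x\<close> by (intro divide_left_mono) auto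
      ultimately show "\<exists>d. DERIV ?g x :> d \<and> d \<le> 0"
        using der x by (intro exI[of _ "x * (1/m - 1/(1+x))"]) (auto simp: mult_nonpos_nonneg)
    qed
    then show ?thesis using gform[of u] by simp
  qed
qed

lemma amgm_term:
  fixes \<sigma> \<tau> r1 r2 :: real and j k :: nat
  assumes s0: "\<sigma> \<ge> 0" and t0: "\<tau> \<ge> 0" and st: "\<sigma>^2 + \<tau>^2 = 1"
    and r1: "r1 \<ge> 0" and r2: "r2 \<ge> 0" and kj: "real k * \<sigma>^2 = real j" and jk: "j \<le> k"
  shows "r1^j * r2^(k-j) \<le> \<sigma>^j * \<tau>^(k-j) * (\<sigma>*r1 + \<tau>*r2)^k"
proof (cases "k = 0")
  case True then show ?thesis using jk by simp
next
  case k0: False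
  show ?thesis
  proof (cases "j = 0")
    case True
    then have "\<sigma> = 0" using kj k0 s0 by simp
    then have "\<tau> = 1" using st t0 by (simp add: power2_eq_1_iff)
    then show ?thesis using True \<open>\<sigma> = 0\<close> by simp
  next
    case j0: False
    show ?thesis
    proof (cases "j = k")
      case True
      then have "\<sigma>^2 = 1" using kj k0 by simp
      then have "\<sigma> = 1" using s0 by (simp add: power2_eq_1_iff)
      then have "\<tau> = 0" using st by simp
      then show ?thesis using True \<open>\<sigma> = 1\<close> by simp
    next
      case False
      then have jk': "j < k" using jk by simp
      have sp: "\<sigma> > 0" using kj j0 s0 by (cases "\<sigma> = 0") auto
      have tk: "real k * \<tau>^2 = real (k - j)"
      proof -
        have "\<tau>^2 = 1 - \<sigma>^2" using st by simp
        then have "real k * \<tau>^2 = real k - real k * \<sigma>^2" by (simp add: right_diff_distrib)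
        then show ?thesis using kj jk by (simp add: of_nat_diff)
      qed
      have tp: "\<tau> > 0" using tk jk' t0 by (cases "\<tau> = 0") auto
      show ?thesis
      proof (cases "r1 = 0 \<or> r2 = 0")
        case True
        have z: "r1^j * r2^(k-j) = 0" using True j0 jk' by auto
        have "0 \<le> \<sigma>^j * \<tau>^(k-j) * (\<sigma>*r1 + \<tau>*r2)^k"
          using s0 t0 r1 r2 by (intro mult_nonneg_nonneg zero_le_power add_nonneg_nonneg) auto
        then show ?thesis using z by linarith
      next
        case False
        then have r1p: "r1 > 0" and r2p: "r2 > 0" using r1 r2 by auto
        define x where "x = r1/\<sigma>"
        define y where "y = r2/\<tau>"
        define A where "A = \<sigma>*r1 + \<tau>*r2"
        have xp: "x > 0" and yp: "y > 0" using r1p r2p sp tp by (auto simp: x_def y_def)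
        have Ap: "A > 0" using r1p r2p sp tp by (auto simp: A_def intro: add_pos_pos)
        have sumA: "real j * x + real (k-j) * y = real k * A"
        proof -
          have "real j * x = real k * \<sigma> * r1" using kj[symmetric] sp by (simp add: x_def power2_eq_square field_simps)
          moreover have "real (k-j) * y = real k * \<tau> * r2" using tk[symmetric] tp by (simp add: y_def power2_eq_square field_simps)
          ultimately show ?thesis by (simp add: A_def algebra_simps)
        qed
        have lx: "ln x \<le> ln A + x/A - 1"
          using ln_le_minus_one[of "x/A"] xp Ap by (simp add: ln_div)
        have ly: "ln y \<le> ln A + y/A - 1"
          using ln_le_minus_one[of "y/A"] yp Ap by (simp add: ln_div)
        have "real j * ln x + real (k-j) * ln y \<le> real j * (ln A + x/A - 1) + real (k-j) * (ln A + y/A - 1)"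
          by (intro add_mono mult_left_mono lx ly) auto
        also have "\<dots> = real k * ln A + (real j * x + real (k-j) * y)/A - real k"
          using jk Ap by (simp add: of_nat_diff field_simps)
        also have "\<dots> = real k * ln A" using sumA Ap by simp
        finally have le: "real j * ln x + real (k-j) * ln y \<le> real k * ln A" .
        have "x^j * y^(k-j) \<le> A^k"
        proof -
          have "ln (x^j * y^(k-j)) = real j * ln x + real (k-j) * ln y"
            using xp yp by (simp add: ln_mult ln_realpow)
          moreover have "ln (A^k) = real k * ln A" using Ap by (simp add: ln_realpow)
          ultimately have "ln (x^j * y^(k-j)) \<le> ln (A^k)" using le by simp
          then show ?thesis using xp yp Ap by simp
        qed
        then have "\<sigma>^j * \<tau>^(k-j) * (x^j * y^(k-j)) \<le> \<sigma>^j * \<tau>^(k-j) * A^k"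
          using s0 t0 by (intro mult_left_mono) auto
        moreover have "\<sigma>^j * \<tau>^(k-j) * (x^j * y^(k-j)) = r1^j * r2^(k-j)"
          using sp tp by (simp add: x_def y_def power_divide)
        ultimately show ?thesis by (simp add: A_def)
      qed
    qed
  qed
qed

lemma half_lower:
  fixes \<sigma> r m :: real and j k :: nat
  assumes s0: "\<sigma> \<ge> 0" and r0: "r \<ge> 0" and kj: "real k * \<sigma>^2 = real j"
    and m0: "0 < m" and m1: "m \<le> 1" and mr: "j > 0 \<Longrightarrow> m*\<sigma> \<le> r"
  shows "\<exists>X. r^j = \<sigma>^j * exp X \<and> real k * (\<sigma>*(r-\<sigma>) - (r-\<sigma>)^2/(2*m)) \<le> X"
proof (cases "j = 0")
  case True
  have "real k * (\<sigma>*(r-\<sigma>) - (r-\<sigma>)^2/(2*m)) \<le> 0"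
  proof (cases "k = 0")
    case False
    then have "\<sigma> = 0" using kj True by simp
    then show ?thesis using m0 by (simp add: mult_nonneg_nonneg)
  qed simp
  then show ?thesis using True by (intro exI[of _ 0]) simp
next
  case False
  then have jp: "j > 0" by simp
  have sp: "\<sigma> > 0" using kj jp s0 by (cases "\<sigma> = 0") auto
  have rp: "r \<ge> m * \<sigma>" using mr jp by simp
  have rpos: "r > 0" using rp m0 sp by (meson less_le_trans mult_pos_pos)
  define u where "u = (r - \<sigma>)/\<sigma>"
  have ru: "r/\<sigma> = 1 + u" using sp by (simp add: u_def field_simps)
  have "m \<le> r/\<sigma>" using rp sp by (simp add: pos_le_divide_eq)
  then have mu: "m \<le> 1 + u" using ru by simp
  have lnb: "u - u^2/(2*m) \<le> ln (r/\<sigma>)" using ln_lower_m[OF m0 m1 mu] ru by simp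
  define X where "X = real j * ln (r/\<sigma>)"
  have "r^j = \<sigma>^j * (r/\<sigma>)^j" using sp by (simp add: power_divide)
  also have "(r/\<sigma>)^j = exp X" using sp rpos
    by (simp add: X_def exp_of_nat_mult)
  finally have eq: "r^j = \<sigma>^j * exp X" .
  have "real j * (u - u^2/(2*m)) \<le> X" unfolding X_def using lnb by (intro mult_left_mono) auto
  moreover have "real j * (u - u^2/(2*m)) = real k * (\<sigma>*(r-\<sigma>) - (r-\<sigma>)^2/(2*m))"
    using sp m0 by (simp add: kj[symmetric] u_def power2_eq_square field_simps)
  ultimately show ?thesis using eq by auto
qed

lemma term_lower:
  fixes \<sigma> \<tau> r1 r2 m :: real and j k :: nat
  assumes s0: "\<sigma> \<ge> 0" and t0: "\<tau> \<ge> 0" and st: "\<sigma>^2 + \<tau>^2 = 1"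
    and r1: "r1 \<ge> 0" and r2: "r2 \<ge> 0" and rr: "r1^2 + r2^2 = 1"
    and kj: "real k * \<sigma>^2 = real j" and jk: "j \<le> k"
    and m0: "0 < m" and m1: "m \<le> 1"
    and mr1: "j > 0 \<Longrightarrow> m*\<sigma> \<le> r1" and mr2: "j < k \<Longrightarrow> m*\<tau> \<le> r2"
  shows "\<sigma>^j * \<tau>^(k-j) * exp (-(real k/2) * (2 - 2*(\<sigma>*r1 + \<tau>*r2)) * (1 + 1/m)) \<le> r1^j * r2^(k-j)"
proof -
  have tk: "real k * \<tau>^2 = real (k - j)"
  proof -
    have "\<tau>^2 = 1 - \<sigma>^2" using st by simp
    then have "real k * \<tau>^2 = real k - real k * \<sigma>^2" by (simp add: right_diff_distrib)
    then show ?thesis using kj jk by (simp add: of_nat_diff)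
  qed
  obtain X where X: "r1^j = \<sigma>^j * exp X" "real k * (\<sigma>*(r1-\<sigma>) - (r1-\<sigma>)^2/(2*m)) \<le> X"
    using half_lower[OF s0 r1 kj m0 m1 mr1] by blast
  obtain Y where Y: "r2^(k-j) = \<tau>^(k-j) * exp Y" "real k * (\<tau>*(r2-\<tau>) - (r2-\<tau>)^2/(2*m)) \<le> Y"
    using half_lower[OF t0 r2 tk m0 m1] mr2 by auto
  define D where "D = 2 - 2*(\<sigma>*r1 + \<tau>*r2)"
  have D1: "\<sigma>*(r1-\<sigma>) + \<tau>*(r2-\<tau>) = -D/2" using st by (simp add: D_def algebra_simps power2_eq_square)
  have D2: "(r1-\<sigma>)^2 + (r2-\<tau>)^2 = D" using st rr by (simp add: D_def algebra_simps power2_eq_square)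
  have "-(real k/2) * D * (1 + 1/m) = real k * (\<sigma>*(r1-\<sigma>) + \<tau>*(r2-\<tau>)) - real k * ((r1-\<sigma>)^2 + (r2-\<tau>)^2)/(2*m)"
    unfolding D1 D2 using m0 by (simp add: field_simps)
  also have "\<dots> = real k * (\<sigma>*(r1-\<sigma>) - (r1-\<sigma>)^2/(2*m)) + real k * (\<tau>*(r2-\<tau>) - (r2-\<tau>)^2/(2*m))"
    by (simp add: add_divide_distrib ring_distribs)
  also have "\<dots> \<le> X + Y" using X(2) Y(2) by linarith
  finally have "exp (-(real k/2) * D * (1 + 1/m)) \<le> exp (X + Y)" by simp
  then have "\<sigma>^j * \<tau>^(k-j) * exp (-(real k/2) * D * (1 + 1/m)) \<le> \<sigma>^j * \<tau>^(k-j) * exp (X + Y)"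
    using s0 t0 by (intro mult_left_mono) auto
  also have "\<dots> = r1^j * r2^(k-j)" using X(1) Y(1) by (simp add: exp_add)
  finally show ?thesis by (simp add: D_def)
qed

lemma sin_sq_diff: fixes a b :: real shows "sin (b+a) * sin (b-a) = (sin b)^2 - (sin a)^2"
proof -
  have "sin (b+a) * sin (b-a) = (sin b)^2 * (cos a)^2 - (cos b)^2 * (sin a)^2"
    unfolding sin_add sin_diff by (simp add: power2_eq_square algebra_simps)
  also have "\<dots> = (sin b)^2 * (1 - (sin a)^2) - (1 - (sin b)^2) * (sin a)^2"
    by (simp add: cos_squared_eq)
  finally show ?thesis by (simp add: algebra_simps)
qed

lemma sin_lin_lower: fixes y :: real assumes "0 \<le> y" "y \<le> 1" shows "(5/6) * y \<le> sin y"
proof -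
  have "y - y^3/6 \<le> sin y" using sin_ge_cubic[of y] assms by simp
  moreover have "y^3 \<le> y"
  proof -
    have "y * y^2 \<le> y * 1" using assms by (intro mult_left_mono) (auto simp: power_le_one)
    then show ?thesis by (simp add: power3_eq_cube power2_eq_square)
  qed
  ultimately show ?thesis by linarith
qed

lemma lowhalf:
  fixes k i :: nat and \<delta> :: real
  assumes kp: "k > 0" and dp: "\<delta> > 0" and ib: "real i * \<delta> \<le> pi/4" and s: "real k * \<delta>^2 \<ge> 100"
  defines "l \<equiv> nat \<lfloor>real k * (sin (real i * \<delta>))^2\<rfloor>"
  defines "a \<equiv> arcsin (sqrt (real l / real k))"
  shows "l \<le> k \<and> 0 \<le> a \<and> a \<le> pi/2 \<and> real k * (sin a)^2 = real l \<and> \<bar>a - real i * \<delta>\<bar> \<le> \<delta>/60 \<and> (i = 0 \<longrightarrow> a = 0)"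
proof -
  define b where "b = real i * \<delta>"
  have b0: "0 \<le> b" using dp by (simp add: b_def)
  have bpi: "b \<le> pi/4" using ib by (simp add: b_def)
  have sb0: "0 \<le> sin b" using b0 bpi pi_gt_zero by (intro sin_ge_zero) auto
  have sb1: "sin b \<le> 1" by simp
  have fl0: "0 \<le> real k * (sin b)^2" by simp
  have lle: "real l \<le> real k * (sin b)^2"
    unfolding l_def b_def[symmetric] using fl0 by linarith
  have lgt: "real k * (sin b)^2 < real l + 1"
    unfolding l_def b_def[symmetric] using fl0 by linarith
  have "(sin b)^2 \<le> 1" using sb0 sb1 by (simp add: power_le_one)
  then have "real k * (sin b)^2 \<le> real k" by (simp add: mult_left_le)
  then have lk: "l \<le> k" using lle by linarith
  define q where "q = sqrt (real l / real k)"
  have q0: "0 \<le> q" by (simp add: q_def)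
  have q1: "q \<le> 1" using lk kp by (simp add: q_def)
  have qq: "q^2 = real l / real k" by (simp add: q_def)
  have sa: "sin a = q" using q0 q1 by (simp add: a_def q_def[symmetric])
  have a0: "0 \<le> a" using q0 q1 by (simp add: a_def q_def[symmetric] arcsin_le_mono[of 0 q, simplified])
  have a1: "a \<le> pi/2" using q0 q1 arcsin_ubound[of q] by (simp add: a_def q_def[symmetric])
  have ksa: "real k * (sin a)^2 = real l" using sa qq kp by simp
  have qsb: "q \<le> sin b"
  proof -
    have "real k * q^2 \<le> real k * (sin b)^2" using qq lle kp by simp
    then have "q^2 \<le> (sin b)^2" using kp by simp
    then show ?thesis using q0 sb0 by (simp add: power2_le_iff_abs_le)
  qed
  have ab: "a \<le> b"
  proof -
    have "arcsin q \<le> arcsin (sin b)" using arcsin_le_mono[of q "sin b"] q0 q1 qsb sb1 sb0 by auto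
    moreover have "arcsin (sin b) = b" using b0 bpi pi_gt_zero by (intro arcsin_sin) auto
    ultimately show ?thesis by (simp add: a_def q_def[symmetric])
  qed
  have err: "b - a \<le> \<delta>/60"
  proof (cases "i = 0")
    case True then show ?thesis using ab a0 dp by (simp add: b_def)
  next
    case False
    then have i1: "real i \<ge> 1" by simp
    have bd: "b \<ge> \<delta>" using i1 dp by (simp add: b_def)
    have pi1: "pi/4 \<le> 1" using pi_less_4 by simp
    have diff: "(sin b)^2 - (sin a)^2 < 1 / real k"
    proof -
      have "real k * ((sin b)^2 - (sin a)^2) < 1" using lgt ksa by (simp add: algebra_simps)
      then show ?thesis using kp by (simp add: field_simps)
    qed
    have s1: "(5/6) * b \<le> sin (b + a)"
    proof -
      have "(5/6) * b \<le> sin b" using sin_lin_lower[of b] b0 bpi pi1 by simp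
      also have "sin b \<le> sin (b + a)" using a0 ab bpi by (intro sin_monotone_2pi_le) auto
      finally show ?thesis .
    qed
    have s2: "(5/6) * (b - a) \<le> sin (b - a)" using sin_lin_lower[of "b - a"] ab a0 bpi pi1 by simp
    have "((5/6) * b) * ((5/6) * (b - a)) \<le> sin (b+a) * sin (b-a)"
      using s1 s2 b0 ab by (intro mult_mono) auto
    also have "\<dots> < 1 / real k" using diff by (simp add: sin_sq_diff)
    finally have "(25/36) * (b * (b - a)) < 1 / real k" by (simp add: algebra_simps)
    moreover have "\<delta> * (b - a) \<le> b * (b - a)" using bd ab by (intro mult_right_mono) auto
    ultimately have h1: "(25/36) * (\<delta> * (b - a)) < 1 / real k" by linarith
    have "real k * ((25/36) * (\<delta> * (b - a))) < real k * (1 / real k)"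
      using h1 kp by (intro mult_strict_left_mono) auto
    then have h2: "(25/36) * (real k * \<delta> * (b - a)) < 1" using kp by (simp add: algebra_simps)
    have "\<delta> * ((25/36) * (real k * \<delta> * (b - a))) < \<delta> * 1"
      using h2 dp by (intro mult_strict_left_mono) auto
    then have h3: "(25/36) * (real k * \<delta>^2 * (b - a)) < \<delta>" by (simp add: power2_eq_square algebra_simps)
    have "100 * (b - a) \<le> real k * \<delta>^2 * (b - a)" using s ab by (intro mult_right_mono) auto
    then have "(25/36) * (100 * (b - a)) < \<delta>" using h3 by linarith
    then have "2500 * (b - a) < 36 * \<delta>" by simp
    then show ?thesis using dp by (simp add: field_simps)
  qed
  have "i = 0 \<longrightarrow> a = 0" using ab a0 by (auto simp: b_def)
  then show ?thesis using lk a0 a1 ksa ab err by (simp add: b_def abs_if)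
qed

lemma geo_inj:
  fixes Q :: real and f :: "nat \<Rightarrow> nat"
  assumes fin: "finite A" and inj: "inj_on f A" and Q0: "0 \<le> Q" and Q1: "Q < 1"
  shows "(\<Sum>i\<in>A. Q^(f i)) \<le> 1/(1-Q)"
proof -
  have "(\<Sum>n\<in>f`A. Q^n) = (\<Sum>i\<in>A. Q^(f i))" using sum.reindex[OF inj, of "\<lambda>n. Q^n"] by simp
  then have "(\<Sum>i\<in>A. Q^(f i)) = (\<Sum>n\<in>f`A. Q^n)" by simp
  also have "\<dots> \<le> (\<Sum>n<Suc (Max (f`A)). Q^n)"
  proof (cases "A = {}")
    case True then show ?thesis using Q0 by (simp add: sum_nonneg)
  next
    case False
    have "f`A \<subseteq> {..<Suc (Max (f`A))}" using fin by (auto simp: less_Suc_eq_le)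
    then show ?thesis using Q0 by (intro sum_mono2) auto
  qed
  also have "\<dots> = (1 - Q^(Suc (Max (f`A))))/(1-Q)" using Q1 sum_gp_strict[of Q "Suc (Max (f`A))"] by (simp del: sum.lessThan_Suc)
  also have "\<dots> \<le> 1/(1-Q)" using Q0 Q1 by (intro divide_right_mono) auto
  finally show ?thesis .
qed

definition ndist :: "nat \<Rightarrow> nat \<Rightarrow> nat" where "ndist i c = (if c \<le> i then i - c else c - i)"

lemma geo_tail:
  fixes Q :: real
  assumes Q0: "0 \<le> Q" and Q1: "Q < 1"
  shows "(\<Sum>i\<in>{i. i \<le> M \<and> 2 \<le> ndist i c}. Q^(ndist i c - 2)) \<le> 2/(1-Q)"
proof -
  let ?A = "{i. i \<le> M \<and> c + 2 \<le> i}" and ?B = "{i. i \<le> M \<and> i + 2 \<le> c}"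
  have eq: "{i. i \<le> M \<and> 2 \<le> ndist i c} = ?A \<union> ?B" by (auto simp: ndist_def)
  have disj: "?A \<inter> ?B = {}" by auto
  have finA: "finite ?A" and finB: "finite ?B" by auto
  have sA: "(\<Sum>i\<in>?A. Q^(ndist i c - 2)) \<le> 1/(1-Q)"
  proof -
    have "(\<Sum>i\<in>?A. Q^(ndist i c - 2)) = (\<Sum>i\<in>?A. Q^(i - c - 2))"
      by (intro sum.cong) (auto simp: ndist_def)
    also have "\<dots> \<le> 1/(1-Q)" using Q0 Q1 by (intro geo_inj) (auto simp: inj_on_def)
    finally show ?thesis .
  qed
  have sB: "(\<Sum>i\<in>?B. Q^(ndist i c - 2)) \<le> 1/(1-Q)"
  proof -
    have "(\<Sum>i\<in>?B. Q^(ndist i c - 2)) = (\<Sum>i\<in>?B. Q^(c - i - 2))"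
      by (intro sum.cong) (auto simp: ndist_def)
    also have "\<dots> \<le> 1/(1-Q)" using Q0 Q1 by (intro geo_inj) (auto simp: inj_on_def)
    finally show ?thesis .
  qed
  have "(\<Sum>i\<in>{i. i \<le> M \<and> 2 \<le> ndist i c}. Q^(ndist i c - 2)) = (\<Sum>i\<in>?A. Q^(ndist i c - 2)) + (\<Sum>i\<in>?B. Q^(ndist i c - 2))"
    unfolding eq by (rule sum.union_disjoint[OF finA finB disj])
  also have "\<dots> \<le> 2/(1-Q)" using sA sB by simp
  finally show ?thesis .
qed

lemma near_card: "card {i. i \<le> M \<and> ndist i c \<le> 1} \<le> 3"
proof -
  have "{i. i \<le> M \<and> ndist i c \<le> 1} \<subseteq> {c - 1, c, c + 1}" by (auto simp: ndist_def)
  then have "card {i. i \<le> M \<and> ndist i c \<le> 1} \<le> card {c - 1, c, c + 1}" by (intro card_mono) auto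
  also have "\<dots> \<le> 3"
  proof -
    have "card (set [c - 1, c, c + 1]) \<le> length [c - 1, c, c + 1]" by (rule card_length)
    then show ?thesis by simp
  qed
  finally show ?thesis .
qed

lemma same_parity_far: "i \<noteq> c \<Longrightarrow> even i = even c \<Longrightarrow> 2 \<le> ndist i c"
  by (auto simp: ndist_def) presburger+

definition lowj :: "nat \<Rightarrow> real \<Rightarrow> nat \<Rightarrow> nat" where
  "lowj k \<delta> i = nat \<lfloor>real k * (sin (real i * \<delta>))^2\<rfloor>"
definition lowa :: "nat \<Rightarrow> real \<Rightarrow> nat \<Rightarrow> real" where
  "lowa k \<delta> i = arcsin (sqrt (real (lowj k \<delta> i) / real k))"
definition gj :: "nat \<Rightarrow> real \<Rightarrow> nat \<Rightarrow> nat \<Rightarrow> nat" where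
  "gj k \<delta> L i = (if i \<le> L then lowj k \<delta> i else k - lowj k \<delta> (2*L - i))"
definition gth :: "nat \<Rightarrow> real \<Rightarrow> nat \<Rightarrow> nat \<Rightarrow> real" where
  "gth k \<delta> L i = (if i \<le> L then lowa k \<delta> i else pi/2 - lowa k \<delta> (2*L - i))"

lemma lowhalf':
  assumes "k > 0" "\<delta> > 0" "real i * \<delta> \<le> pi/4" "real k * \<delta>^2 \<ge> 100"
  shows "lowj k \<delta> i \<le> k \<and> 0 \<le> lowa k \<delta> i \<and> lowa k \<delta> i \<le> pi/2 \<and>
    real k * (sin (lowa k \<delta> i))^2 = real (lowj k \<delta> i) \<and> \<bar>lowa k \<delta> i - real i * \<delta>\<bar> \<le> \<delta>/60 \<and>
    (i = 0 \<longrightarrow> lowa k \<delta> i = 0)"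
  using lowhalf[OF assms] unfolding lowa_def lowj_def by blast

lemma grid:
  fixes k L i :: nat and \<delta> :: real
  assumes kp: "k > 0" and Lp: "L > 0" and dd: "\<delta> = pi / (4 * real L)" and s: "real k * \<delta>^2 \<ge> 100"
    and iM: "i \<le> 2*L"
  shows "gj k \<delta> L i \<le> k \<and> 0 \<le> gth k \<delta> L i \<and> gth k \<delta> L i \<le> pi/2 \<and>
    real k * (sin (gth k \<delta> L i))^2 = real (gj k \<delta> L i) \<and> \<bar>gth k \<delta> L i - real i * \<delta>\<bar> \<le> \<delta>/60 \<and>
    (i = 0 \<longrightarrow> gth k \<delta> L i = 0) \<and> (i = 2*L \<longrightarrow> gth k \<delta> L i = pi/2)"
proof -
  have dp: "\<delta> > 0" using dd Lp by simp
  have Ld: "real L * \<delta> = pi/4" using dd Lp by simp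
  show ?thesis
  proof (cases "i \<le> L")
    case True
    have "real i * \<delta> \<le> real L * \<delta>" using True dp by (intro mult_right_mono) auto
    then have "real i * \<delta> \<le> pi/4" using Ld by simp
    from lowhalf'[OF kp dp this s] True Lp show ?thesis by (simp add: gj_def gth_def)
  next
    case False
    define i' where "i' = 2*L - i"
    have i'L: "i' < L" using False iM by (simp add: i'_def)
    have ii': "real i = 2 * real L - real i'" using iM by (simp add: i'_def of_nat_diff)
    have "real i' * \<delta> \<le> real L * \<delta>" using i'L dp by (intro mult_right_mono) auto
    then have "real i' * \<delta> \<le> pi/4" using Ld by simp
    note H = lowhalf'[OF kp dp this s]
    have gj: "gj k \<delta> L i = k - lowj k \<delta> i'" using False by (simp add: gj_def i'_def)
    have gt: "gth k \<delta> L i = pi/2 - lowa k \<delta> i'" using False by (simp add: gth_def i'_def)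
    have "real k * (sin (pi/2 - lowa k \<delta> i'))^2 = real k * (1 - (sin (lowa k \<delta> i'))^2)"
      by (simp add: sin_diff cos_squared_eq)
    also have "\<dots> = real k - real (lowj k \<delta> i')" using H by (simp add: right_diff_distrib)
    also have "\<dots> = real (k - lowj k \<delta> i')" using H by (simp add: of_nat_diff)
    finally have ks: "real k * (sin (pi/2 - lowa k \<delta> i'))^2 = real (k - lowj k \<delta> i')" .
    have "pi/2 - lowa k \<delta> i' - real i * \<delta> = real i' * \<delta> - lowa k \<delta> i'"
    proof -
      have "real i * \<delta> + real i' * \<delta> = (real i + real i') * \<delta>" by (simp add: algebra_simps)
      also have "real i + real i' = 2 * real L" using ii' by simp
      finally have "real i * \<delta> + real i' * \<delta> = 2 * (real L * \<delta>)" by simp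
      then show ?thesis using Ld by linarith
    qed
    then have "pi/2 - lowa k \<delta> i' - real i * \<delta> = -(lowa k \<delta> i' - real i' * \<delta>)" by linarith
    moreover have e: "\<bar>lowa k \<delta> i' - real i' * \<delta>\<bar> \<le> \<delta>/60" using H by blast
    ultimately have err: "\<bar>pi/2 - lowa k \<delta> i' - real i * \<delta>\<bar> \<le> \<delta>/60" by (simp only: abs_minus_cancel)
    have "i = 2*L \<longrightarrow> i' = 0" by (simp add: i'_def)
    then show ?thesis using H False gj gt ks err by auto
  qed
qed

lemma sin_lip: "\<bar>sin x - sin y\<bar> \<le> \<bar>x - (y::real)\<bar>"
proof -
  have "\<bar>sin x - sin y\<bar> = 2 * \<bar>sin ((x - y)/2)\<bar> * \<bar>cos ((x + y)/2)\<bar>"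
    by (simp add: sin_diff_sin abs_mult)
  also have "\<dots> \<le> 2 * \<bar>(x - y)/2\<bar> * 1"
    by (intro mult_mono abs_sin_x_le_abs_x) (auto simp: abs_cos_le_one)
  finally show ?thesis by simp
qed

lemma cos_lip: "\<bar>cos x - cos y\<bar> \<le> \<bar>x - (y::real)\<bar>"
proof -
  have "\<bar>cos x - cos y\<bar> = 2 * \<bar>sin ((x + y)/2)\<bar> * \<bar>sin ((y - x)/2)\<bar>"
    by (simp add: cos_diff_cos abs_mult)
  also have "\<dots> \<le> 2 * 1 * \<bar>(y - x)/2\<bar>"
    by (intro mult_mono abs_sin_x_le_abs_x) (auto simp: abs_sin_le_one)
  finally show ?thesis by simp
qed

lemma select:
  fixes \<theta> :: "nat \<Rightarrow> real" and \<delta> \<phi> :: real and M :: nat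
  assumes dp: "\<delta> > 0" and d1: "\<delta> \<le> 1/10" and Md: "real M * \<delta> = pi/2"
    and th: "\<And>i. i \<le> M \<Longrightarrow> 0 \<le> \<theta> i \<and> \<theta> i \<le> pi/2 \<and> \<bar>\<theta> i - real i * \<delta>\<bar> \<le> \<delta>/60"
    and th0: "\<theta> 0 = 0" and thM: "\<theta> M = pi/2" and ph0: "0 \<le> \<phi>" and ph1: "\<phi> \<le> pi/2"
  obtains c where "c \<le> M" "\<bar>\<theta> c - \<phi>\<bar> \<le> (31/60) * \<delta>" "(1/3) * sin (\<theta> c) \<le> sin \<phi>"
    "(1/3) * cos (\<theta> c) \<le> cos \<phi>" "\<And>i. i \<le> M \<Longrightarrow> (real (ndist i c) - 31/60) * \<delta> \<le> \<bar>\<theta> i - \<phi>\<bar>"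
proof -
  define x where "x = \<phi> / \<delta>"
  define c where "c = nat \<lfloor>x + 1/2\<rfloor>"
  have x0: "0 \<le> x" using ph0 dp by (simp add: x_def)
  have xM: "x \<le> real M" using ph1 Md dp by (simp add: x_def field_simps)
  have c1: "real c \<le> x + 1/2" using x0 by (simp add: c_def)
  have c2: "x + 1/2 < real c + 1" using x0 by (simp add: c_def)
  have cM: "c \<le> M" using c1 xM by linarith
  have phc: "\<bar>\<phi> - real c * \<delta>\<bar> \<le> \<delta>/2"
  proof -
    have "\<phi> = x * \<delta>" using dp by (simp add: x_def)
    then have "\<phi> - real c * \<delta> = (x - real c) * \<delta>" by (simp add: algebra_simps)
    moreover have "\<bar>x - real c\<bar> \<le> 1/2" using c1 c2 by linarith
    ultimately show ?thesis using dp by (simp add: abs_mult)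
  qed
  note thc = th[OF cM]
  have main: "\<bar>\<theta> c - \<phi>\<bar> \<le> (31/60) * \<delta>" using thc phc by linarith
  have far: "(real (ndist i c) - 31/60) * \<delta> \<le> \<bar>\<theta> i - \<phi>\<bar>" if iM: "i \<le> M" for i
  proof -
    have "real (ndist i c) = \<bar>real i - real c\<bar>" by (simp add: ndist_def of_nat_diff)
    then have "real (ndist i c) * \<delta> = \<bar>real i * \<delta> - real c * \<delta>\<bar>" using dp
      by (simp add: abs_mult left_diff_distrib[symmetric])
    moreover have "\<bar>\<theta> i - real i * \<delta>\<bar> \<le> \<delta>/60" using th[OF iM] by blast
    moreover have "\<bar>real i * \<delta> - real c * \<delta>\<bar> \<le> \<bar>\<theta> i - \<phi>\<bar> + \<bar>\<theta> i - real i * \<delta>\<bar> + \<bar>\<phi> - real c * \<delta>\<bar>"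
      by arith
    ultimately show ?thesis using phc by (simp add: left_diff_distrib)
  qed
  have s59: "(5/6) * ((59/60) * \<delta>) \<le> sin ((59/60) * \<delta>)" using dp d1 by (intro sin_lin_lower) auto
  have sinc: "(1/3) * sin (\<theta> c) \<le> sin \<phi>"
  proof (cases "\<theta> c \<le> \<phi>")
    case True
    have "sin (\<theta> c) \<le> sin \<phi>" using True thc ph1 by (intro sin_monotone_2pi_le) auto
    moreover have "0 \<le> sin (\<theta> c)" using thc pi_gt_zero by (intro sin_ge_zero) auto
    ultimately show ?thesis by linarith
  next
    case False
    then have "c \<noteq> 0" using th0 ph0 by (metis order.trans order_refl)
    then have "real c \<ge> 1" by simp
    then have "1 * \<delta> \<le> real c * \<delta>" using dp by (intro mult_right_mono) auto
    then have tl: "(59/60) * \<delta> \<le> \<theta> c" using thc by arith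
    have "sin ((59/60) * \<delta>) \<le> sin (\<theta> c)" using tl thc dp by (intro sin_monotone_2pi_le) auto
    then have sl: "(5/6) * ((59/60) * \<delta>) \<le> sin (\<theta> c)" using s59 by linarith
    have "sin (\<theta> c) - sin \<phi> \<le> \<bar>\<theta> c - \<phi>\<bar>" using sin_lip[of "\<theta> c" \<phi>] by linarith
    then show ?thesis using sl main by linarith
  qed
  have cosc: "(1/3) * cos (\<theta> c) \<le> cos \<phi>"
  proof (cases "\<phi> \<le> \<theta> c")
    case True
    have "cos (\<theta> c) \<le> cos \<phi>" using True thc ph0 by (intro cos_monotone_0_pi_le) auto
    moreover have "0 \<le> cos (\<theta> c)" using thc by (intro cos_ge_zero) auto
    ultimately show ?thesis by linarith
  next
    case False
    then have "c \<noteq> M" using thM ph1 by metis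
    then have cM1: "real c + 1 \<le> real M" using cM by linarith
    have "(real c + 1) * \<delta> \<le> real M * \<delta>" using cM1 dp by (intro mult_right_mono) auto
    then have "real c * \<delta> + \<delta> \<le> real M * \<delta>" by (simp add: distrib_right)
    then have tl: "(59/60) * \<delta> \<le> pi/2 - \<theta> c" using thc Md by arith
    have "sin ((59/60) * \<delta>) \<le> sin (pi/2 - \<theta> c)" using tl thc dp by (intro sin_monotone_2pi_le) auto
    moreover have "sin (pi/2 - \<theta> c) = cos (\<theta> c)" by (simp add: sin_diff)
    ultimately have sl: "(5/6) * ((59/60) * \<delta>) \<le> cos (\<theta> c)" using s59 by linarith
    have "cos (\<theta> c) - cos \<phi> \<le> \<bar>\<theta> c - \<phi>\<bar>" using cos_lip[of "\<theta> c" \<phi>] by linarith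
    then show ?thesis using sl main by linarith
  qed
  show ?thesis using that[OF cM main sinc cosc far] by blast
qed

lemma term_bounds:
  fixes k j :: nat and \<theta> \<phi> :: real
  assumes jk: "j \<le> k" and kj: "real k * (sin \<theta>)^2 = real j"
    and t0: "0 \<le> \<theta>" and t1: "\<theta> \<le> pi/2" and p0: "0 \<le> \<phi>" and p1: "\<phi> \<le> pi/2"
  defines "T \<equiv> (sin \<phi>)^j * (cos \<phi>)^(k-j) / ((sin \<theta>)^j * (cos \<theta>)^(k-j))"
  shows "0 \<le> T" "T \<le> exp (-(real k/3) * (\<theta> - \<phi>)^2)"
    "(1/3) * sin \<theta> \<le> sin \<phi> \<Longrightarrow> (1/3) * cos \<theta> \<le> cos \<phi> \<Longrightarrow> exp (-2 * real k * (\<theta> - \<phi>)^2) \<le> T"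
proof -
  define \<sigma> where "\<sigma> = sin \<theta>"
  define \<tau> where "\<tau> = cos \<theta>"
  define r1 where "r1 = sin \<phi>"
  define r2 where "r2 = cos \<phi>"
  have pi0: "0 < pi" by simp
  have s0: "\<sigma> \<ge> 0" unfolding \<sigma>_def using t0 t1 by (intro sin_ge_zero) auto
  have tau0: "\<tau> \<ge> 0" unfolding \<tau>_def using t0 t1 by (intro cos_ge_zero) auto
  have r10: "r1 \<ge> 0" unfolding r1_def using p0 p1 by (intro sin_ge_zero) auto
  have r20: "r2 \<ge> 0" unfolding r2_def using p0 p1 by (intro cos_ge_zero) auto
  have st: "\<sigma>^2 + \<tau>^2 = 1" by (simp add: \<sigma>_def \<tau>_def)
  have rr: "r1^2 + r2^2 = 1" by (simp add: r1_def r2_def)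
  have kj': "real k * \<sigma>^2 = real j" using kj by (simp add: \<sigma>_def)
  have Pp: "\<sigma>^j * \<tau>^(k-j) > 0"
  proof -
    have "\<sigma>^j > 0"
    proof (cases "j = 0")
      case False
      then have "\<sigma> \<noteq> 0" using kj' by auto
      then show ?thesis using s0 by simp
    qed simp
    moreover have "\<tau>^(k-j) > 0"
    proof (cases "k - j = 0")
      case False
      have "\<tau> \<noteq> 0"
      proof
        assume "\<tau> = 0"
        then have "\<sigma>^2 = 1" using st by simp
        then have "real k = real j" using kj' by simp
        then show False using False by simp
      qed
      then show ?thesis using tau0 by simp
    qed simp
    ultimately show ?thesis by simp
  qed
  have cd: "\<sigma>*r1 + \<tau>*r2 = cos (\<theta> - \<phi>)" by (simp add: \<sigma>_def \<tau>_def r1_def r2_def cos_diff algebra_simps)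
  have Tdef: "T = r1^j * r2^(k-j) / (\<sigma>^j * \<tau>^(k-j))" by (simp add: T_def \<sigma>_def \<tau>_def r1_def r2_def)
  show "0 \<le> T" unfolding Tdef using Pp r10 r20 by simp
  have dpi: "\<bar>\<theta> - \<phi>\<bar> \<le> pi/2" using t0 t1 p0 p1 by arith
  have c0: "0 \<le> cos (\<theta> - \<phi>)" using t0 t1 p0 p1 by (intro cos_ge_zero) auto
  have "r1^j * r2^(k-j) \<le> \<sigma>^j * \<tau>^(k-j) * (\<sigma>*r1 + \<tau>*r2)^k"
    by (rule amgm_term[OF s0 tau0 st r10 r20 kj' jk])
  then have "T \<le> cos (\<theta> - \<phi>) ^ k" unfolding Tdef cd using Pp by (simp add: divide_le_eq mult.commute)
  also have "\<dots> \<le> exp (-((\<theta> - \<phi>)^2/3)) ^ k"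
  proof (rule power_mono[OF _ c0])
    have "cos (\<theta> - \<phi>) \<le> 1 - (\<theta> - \<phi>)^2/3" by (rule cos_le_quad[OF dpi])
    also have "\<dots> \<le> exp (-((\<theta> - \<phi>)^2/3))" using exp_ge_add_one_self[of "-((\<theta> - \<phi>)^2/3)"] by simp
    finally show "cos (\<theta> - \<phi>) \<le> exp (-((\<theta> - \<phi>)^2/3))" .
  qed
  also have "\<dots> = exp (-(real k/3) * (\<theta> - \<phi>)^2)"
    by (simp add: exp_of_nat_mult[symmetric] algebra_simps)
  finally show "T \<le> exp (-(real k/3) * (\<theta> - \<phi>)^2)" .
  assume m1: "(1/3) * sin \<theta> \<le> sin \<phi>" and m2: "(1/3) * cos \<theta> \<le> cos \<phi>"
  have "\<sigma>^j * \<tau>^(k-j) * exp (-(real k/2) * (2 - 2*(\<sigma>*r1 + \<tau>*r2)) * (1 + 1/(1/3))) \<le> r1^j * r2^(k-j)"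
    by (rule term_lower[OF s0 tau0 st r10 r20 rr kj' jk]) (use m1 m2 in \<open>auto simp: \<sigma>_def \<tau>_def r1_def r2_def\<close>)
  then have low: "exp (-(real k/2) * (2 - 2*cos (\<theta> - \<phi>)) * 4) \<le> T"
    unfolding Tdef cd using Pp by (simp add: le_divide_eq mult.commute)
  have "2 - 2*cos (\<theta> - \<phi>) \<le> (\<theta> - \<phi>)^2" using cos_ge_quad[of "\<theta> - \<phi>"] by linarith
  then have "-2 * real k * (\<theta> - \<phi>)^2 \<le> -(real k/2) * (2 - 2*cos (\<theta> - \<phi>)) * 4"
    by (simp add: mult_left_mono)
  then show "exp (-2 * real k * (\<theta> - \<phi>)^2) \<le> T" using low by (meson exp_le_cancel_iff order_trans)
qed

lemma quad_aux: "(21/10) + (27/10) * (n - 2) \<le> (n - 31/60)^2" for n :: real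
proof -
  have "(n - 31/60)^2 - ((21/10) + (27/10) * (n - 2)) = (n - 28/15)^2 + 297/3600"
    by (simp add: power2_eq_square field_simps)
  moreover have "0 \<le> (n - 28/15)^2 + 297/3600" by simp
  ultimately show ?thesis by linarith
qed

lemma sums:
  fixes t \<theta> :: "nat \<Rightarrow> real" and \<delta> \<phi> s :: real and k M c :: nat
  assumes sdef: "s = real k * \<delta>^2" and s100: "100 \<le> s" and dp: "\<delta> > 0" and cM: "c \<le> M"
    and tnn: "\<And>i. i \<le> M \<Longrightarrow> 0 \<le> t i"
    and tup: "\<And>i. i \<le> M \<Longrightarrow> t i \<le> exp (-(real k/3) * (\<theta> i - \<phi>)^2)"
    and far: "\<And>i. i \<le> M \<Longrightarrow> (real (ndist i c) - 31/60) * \<delta> \<le> \<bar>\<theta> i - \<phi>\<bar>"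
    and main: "\<bar>\<theta> c - \<phi>\<bar> \<le> (31/60) * \<delta>"
    and tlow: "exp (-2 * real k * (\<theta> c - \<phi>)^2) \<le> t c"
  shows "exp (-(27/50) * s) \<le> t c"
    "(\<Sum>i\<in>{i. i \<le> M \<and> i \<noteq> c \<and> even i = even c}. t i) \<le> (1/2) * exp (-(27/50) * s)"
    "(\<Sum>i\<in>{..M}. t i) \<le> 4"
proof -
  have "\<bar>\<theta> c - \<phi>\<bar>^2 \<le> ((31/60) * \<delta>)^2" by (rule power_mono[OF main]) simp
  then have "(\<theta> c - \<phi>)^2 \<le> ((31/60) * \<delta>)^2" by simp
  then have "2 * real k * (\<theta> c - \<phi>)^2 \<le> 2 * real k * ((31/60) * \<delta>)^2" by (simp add: mult_left_mono)
  also have "\<dots> = (1922/3600) * s" by (simp add: sdef power2_eq_square)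
  also have "\<dots> \<le> (27/50) * s" using s100 by simp
  finally have "-(27/50) * s \<le> -2 * real k * (\<theta> c - \<phi>)^2" by simp
  then have "exp (-(27/50) * s) \<le> exp (-2 * real k * (\<theta> c - \<phi>)^2)" by simp
  then show tc: "exp (-(27/50) * s) \<le> t c" using tlow by linarith
  define Q where "Q = exp (-(9/10) * s)"
  have Q0: "0 \<le> Q" by (simp add: Q_def)
  have Qh: "Q \<le> 1/2"
  proof -
    have "2 \<le> exp ((9/10) * s)" using exp_ge_add_one_self[of "(9/10) * s"] s100 by linarith
    then show ?thesis by (simp add: Q_def exp_minus field_simps)
  qed
  define T where "T = {i. i \<le> M \<and> 2 \<le> ndist i c}"
  have tT: "t i \<le> exp (-(7/10) * s) * Q^(ndist i c - 2)" if iT: "i \<in> T" for i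
  proof -
    have iM: "i \<le> M" and n2: "2 \<le> ndist i c" using iT by (auto simp: T_def)
    define n where "n = real (ndist i c)"
    have n2': "2 \<le> n" using n2 by (simp add: n_def)
    have "(n - 31/60) * \<delta> \<le> \<bar>\<theta> i - \<phi>\<bar>" using far[OF iM] by (simp add: n_def)
    moreover have "0 \<le> (n - 31/60) * \<delta>" using n2' dp by simp
    ultimately have "((n - 31/60) * \<delta>)^2 \<le> (\<theta> i - \<phi>)^2"
    proof -
      have "((n - 31/60) * \<delta>)^2 \<le> \<bar>\<theta> i - \<phi>\<bar>^2" by (rule power_mono) fact+
      then show ?thesis by simp
    qed
    then have "(n - 31/60)^2 * \<delta>^2 \<le> (\<theta> i - \<phi>)^2" by (simp add: power_mult_distrib)
    moreover have "((21/10) + (27/10) * (n - 2)) * \<delta>^2 \<le> (n - 31/60)^2 * \<delta>^2"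
      by (intro mult_right_mono quad_aux) auto
    ultimately have "((21/10) + (27/10) * (n - 2)) * \<delta>^2 \<le> (\<theta> i - \<phi>)^2" by linarith
    then have "(real k/3) * (((21/10) + (27/10) * (n - 2)) * \<delta>^2) \<le> (real k/3) * (\<theta> i - \<phi>)^2"
      by (intro mult_left_mono) auto
    moreover have "(real k/3) * (((21/10) + (27/10) * (n - 2)) * \<delta>^2) = (7/10) * s + real (ndist i c - 2) * ((9/10) * s)"
    proof -
      have e: "real (ndist i c - 2) = n - 2" using n2 by (simp add: n_def of_nat_diff)
      show ?thesis unfolding e by (simp add: sdef field_simps)
    qed
    ultimately have "-(real k/3) * (\<theta> i - \<phi>)^2 \<le> -(7/10) * s + real (ndist i c - 2) * (-(9/10) * s)" by simp
    then have "exp (-(real k/3) * (\<theta> i - \<phi>)^2) \<le> exp (-(7/10) * s + real (ndist i c - 2) * (-(9/10) * s))"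
      by simp
    also have "\<dots> = exp (-(7/10) * s) * Q^(ndist i c - 2)"
      by (simp only: Q_def exp_add exp_of_nat_mult[symmetric])
    finally show ?thesis using tup[OF iM] by linarith
  qed
  have sumT: "(\<Sum>i\<in>T. t i) \<le> 4 * exp (-(7/10) * s)"
  proof -
    have "(\<Sum>i\<in>T. t i) \<le> (\<Sum>i\<in>T. exp (-(7/10) * s) * Q^(ndist i c - 2))"
      by (intro sum_mono tT)
    also have "\<dots> = exp (-(7/10) * s) * (\<Sum>i\<in>T. Q^(ndist i c - 2))" by (simp add: sum_distrib_left)
    also have "\<dots> \<le> exp (-(7/10) * s) * (2/(1-Q))"
      unfolding T_def using Q0 Qh by (intro mult_left_mono geo_tail) auto
    also have "\<dots> \<le> exp (-(7/10) * s) * 4"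
    proof -
      have "2/(1-Q) \<le> 4" using Qh by (simp add: field_simps)
      then show ?thesis by (intro mult_left_mono) auto
    qed
    finally show ?thesis by simp
  qed
  have e8: "8 * exp (-(7/10) * s) \<le> exp (-(27/50) * s)"
  proof -
    have "8 \<le> exp ((4/25) * s)" using exp_ge_add_one_self[of "(4/25) * s"] s100 by linarith
    then have "8 * exp (-(7/10) * s) \<le> exp ((4/25) * s) * exp (-(7/10) * s)" by (intro mult_right_mono) auto
    also have "\<dots> = exp (-(27/50) * s)" by (simp add: exp_add[symmetric])
    finally show ?thesis .
  qed
  have sub: "{i. i \<le> M \<and> i \<noteq> c \<and> even i = even c} \<subseteq> T"
    using same_parity_far by (auto simp: T_def)
  have "(\<Sum>i\<in>{i. i \<le> M \<and> i \<noteq> c \<and> even i = even c}. t i) \<le> (\<Sum>i\<in>T. t i)"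
    using sub tnn by (intro sum_mono2) (auto simp: T_def)
  then show "(\<Sum>i\<in>{i. i \<le> M \<and> i \<noteq> c \<and> even i = even c}. t i) \<le> (1/2) * exp (-(27/50) * s)"
    using sumT e8 by linarith
  define N where "N = {i. i \<le> M \<and> ndist i c \<le> 1}"
  have split: "{..M} = N \<union> T" by (auto simp: N_def T_def)
  have "(\<Sum>i\<in>{..M}. t i) = (\<Sum>i\<in>N. t i) + (\<Sum>i\<in>T. t i)"
    unfolding split by (intro sum.union_disjoint) (auto simp: N_def T_def)
  moreover have "(\<Sum>i\<in>N. t i) \<le> 3"
  proof -
    have "(\<Sum>i\<in>N. t i) \<le> (\<Sum>i\<in>N. 1)"
    proof (intro sum_mono)
      fix i assume "i \<in> N"
      then have iM: "i \<le> M" by (simp add: N_def)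
      have "exp (-(real k/3) * (\<theta> i - \<phi>)^2) \<le> 1" by simp
      then show "t i \<le> 1" using tup[OF iM] by linarith
    qed
    also have "\<dots> = real (card N)" by simp
    also have "\<dots> \<le> 3" using near_card[of M c] by (simp add: N_def)
    finally show ?thesis .
  qed
  moreover have "4 * exp (-(7/10) * s) \<le> 1"
  proof -
    have "exp (-(27/50) * s) \<le> 1" using s100 by simp
    moreover have "0 \<le> exp (-(7/10) * s)" by simp
    ultimately show ?thesis using e8 by linarith
  qed
  ultimately show "(\<Sum>i\<in>{..M}. t i) \<le> 4" using sumT by linarith
qed

lemma hom_zero: "hom_poly2 k (\<lambda>z1 z2. 0)"
  unfolding hom_poly2_def by (intro exI[of _ "\<lambda>j. 0"]) simp

lemma hom_add: "hom_poly2 k P \<Longrightarrow> hom_poly2 k Q \<Longrightarrow> hom_poly2 k (\<lambda>z1 z2. P z1 z2 + Q z1 z2)"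
  unfolding hom_poly2_def
proof (elim exE)
  fix a b assume a: "\<forall>z1 z2. P z1 z2 = (\<Sum>j\<le>k. a j * z1 ^ j * z2 ^ (k - j))"
    and b: "\<forall>z1 z2. Q z1 z2 = (\<Sum>j\<le>k. b j * z1 ^ j * z2 ^ (k - j))"
  show "\<exists>c. \<forall>z1 z2. P z1 z2 + Q z1 z2 = (\<Sum>j\<le>k. c j * z1 ^ j * z2 ^ (k - j))"
    by (intro exI[of _ "\<lambda>j. a j + b j"]) (simp add: a b sum.distrib distrib_right)
qed

lemma hom_mono: "e \<le> k \<Longrightarrow> hom_poly2 k (\<lambda>z1 z2. c * z1^e * z2^(k-e))"
  unfolding hom_poly2_def
proof (intro exI[of _ "\<lambda>j. if j = e then c else 0"] allI)
  fix z1 z2 :: complex assume "e \<le> k"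
  have "(\<Sum>j\<le>k. (if j = e then c else 0) * z1 ^ j * z2 ^ (k - j)) = (\<Sum>j\<le>k. if j = e then c * z1 ^ e * z2 ^ (k - e) else 0)"
    by (intro sum.cong) auto
  also have "\<dots> = c * z1^e * z2^(k-e)" using \<open>e \<le> k\<close> by (simp add: sum.delta)
  finally show "c * z1 ^ e * z2 ^ (k - e) = (\<Sum>j\<le>k. (if j = e then c else 0) * z1 ^ j * z2 ^ (k - j))" by simp
qed

lemma hom_sum:
  assumes "finite S" "\<And>i. i \<in> S \<Longrightarrow> e i \<le> k"
  shows "hom_poly2 k (\<lambda>z1 z2. \<Sum>i\<in>S. c i * z1^(e i) * z2^(k - e i))"
  using assms
proof (induction S rule: finite_induct)
  case empty then show ?case by (simp add: hom_zero)
next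
  case (insert x F)
  have "hom_poly2 k (\<lambda>z1 z2. c x * z1^(e x) * z2^(k - e x) + (\<Sum>i\<in>F. c i * z1^(e i) * z2^(k - e i)))"
    using insert by (intro hom_add hom_mono) auto
  then show ?case using insert by simp
qed

lemma params:
  fixes k :: nat
  assumes k: "k \<ge> 40000"
  defines "L \<equiv> nat \<lfloor>pi * sqrt (real k) / 40\<rfloor>"
  defines "\<delta> \<equiv> pi / (4 * real L)"
  shows "L > 0" "\<delta> > 0" "100 \<le> real k * \<delta>^2" "real k * \<delta>^2 \<le> 400" "\<delta> \<le> 1/10" "real (2*L) * \<delta> = pi/2"
proof -
  define S where "S = sqrt (real k)"
  define R where "R = pi * S / 40"
  have S200: "200 \<le> S" unfolding S_def using k by (intro real_le_rsqrt) auto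
  have SS: "S^2 = real k" by (simp add: S_def)
  have pi2: "2 \<le> pi" by (rule pi_ge_two)
  have "2 * 200 \<le> pi * S" using pi2 S200 by (intro mult_mono) auto
  then have R10: "10 \<le> R" by (simp add: R_def)
  have RL: "real L \<le> R" "R - 1 < real L"
    using R10 by (simp_all add: L_def R_def[symmetric] S_def[symmetric])
  show Lp: "L > 0" using RL R10 by simp
  have Lr: "real L > 0" using Lp by simp
  show dp: "\<delta> > 0" using Lr by (simp add: \<delta>_def)
  have dL: "\<delta> * (4 * real L) = pi" using Lr by (simp add: \<delta>_def)
  have low: "10 \<le> S * \<delta>"
  proof -
    have "4 * real L * 10 \<le> 4 * R * 10" using RL by simp
    also have "\<dots> = pi * S" by (simp add: R_def)
    also have "\<dots> = S * \<delta> * (4 * real L)" using dL by (simp add: algebra_simps)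
    finally have "10 * (4 * real L) \<le> (S * \<delta>) * (4 * real L)" by (simp add: algebra_simps)
    then show ?thesis using Lr by simp
  qed
  have high: "S * \<delta> \<le> 20"
  proof -
    have "R / 2 \<le> real L" using RL R10 by linarith
    then have "pi * S \<le> 80 * real L" by (simp add: R_def)
    also have "pi * S = S * \<delta> * (4 * real L)" using dL by (simp add: algebra_simps)
    finally have "(S * \<delta>) * (4 * real L) \<le> 20 * (4 * real L)" by simp
    then show ?thesis using Lr by simp
  qed
  have kd: "real k * \<delta>^2 = (S * \<delta>)^2" using SS by (simp add: power_mult_distrib)
  have "10^2 \<le> (S * \<delta>)^2" using low by (intro power_mono) auto
  then show "100 \<le> real k * \<delta>^2" using kd by simp
  have "(S * \<delta>)^2 \<le> 20^2" using high low by (intro power_mono) auto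
  then show "real k * \<delta>^2 \<le> 400" using kd by simp
  have "200 * \<delta> \<le> S * \<delta>" using S200 dp by (intro mult_right_mono) auto
  then show "\<delta> \<le> 1/10" using high by linarith
  show "real (2*L) * \<delta> = pi/2" using dL by (simp add: algebra_simps)
qed

theorem proposition1:
  shows "\<exists>\<eta>::real. 0 < \<eta> \<and> \<eta> \<le> 1 \<and>
    (\<exists>K::nat. \<forall>k\<ge>K. \<exists>p q. hom_poly2 k p \<and> hom_poly2 k q \<and>
       (\<forall>z1 z2. norm2 z1 z2 = 1 \<longrightarrow>
          sqrt \<eta> \<le> norm2 (p z1 z2) (q z1 z2) \<and> norm2 (p z1 z2) (q z1 z2) \<le> 1))"
proof -
  define \<eta> :: real where "\<eta> = (exp (-216) / 12)^2"
  have eta0: "0 < \<eta>" by (simp add: \<eta>_def)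
  have eta1: "\<eta> \<le> 1"
  proof -
    have "exp (-216) \<le> (1::real)" by simp
    then have "exp (-216) / 12 \<le> (1::real)" by linarith
    then have "(exp (-216) / 12)^2 \<le> (1::real)" by (simp add: power_le_one)
    then show ?thesis by (simp add: \<eta>_def)
  qed
  have sq: "sqrt \<eta> = exp (-216) / 12" by (simp add: \<eta>_def)
  have main: "\<exists>p q. hom_poly2 k p \<and> hom_poly2 k q \<and>
       (\<forall>z1 z2. norm2 z1 z2 = 1 \<longrightarrow>
          sqrt \<eta> \<le> norm2 (p z1 z2) (q z1 z2) \<and> norm2 (p z1 z2) (q z1 z2) \<le> 1)"
    if k: "k \<ge> 40000" for k :: nat
  proof -
    define L where "L = nat \<lfloor>pi * sqrt (real k) / 40\<rfloor>"
    define \<delta> where "\<delta> = pi / (4 * real L)"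
    note P = params[OF k, folded L_def, folded \<delta>_def]
    define M where "M = 2 * L"
    define s where "s = real k * \<delta>^2"
    have kp: "k > 0" using k by simp
    have Md: "real M * \<delta> = pi/2" using P(6) by (simp add: M_def)
    define e where "e = gj k \<delta> L"
    define th where "th = gth k \<delta> L"
    have G: "e i \<le> k \<and> 0 \<le> th i \<and> th i \<le> pi/2 \<and> real k * (sin (th i))^2 = real (e i) \<and>
        \<bar>th i - real i * \<delta>\<bar> \<le> \<delta>/60 \<and> (i = 0 \<longrightarrow> th i = 0) \<and> (i = M \<longrightarrow> th i = pi/2)" if "i \<le> M" for i
      using grid[OF kp P(1) \<delta>_def P(3)] that by (simp add: e_def th_def M_def)
    define coef where "coef i = 1 / ((sin (th i))^(e i) * (cos (th i))^(k - e i))" for i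
    define F where "F S = (\<lambda>z1 z2. \<Sum>i\<in>S. complex_of_real (coef i / 6) * z1^(e i) * z2^(k - e i))" for S
    define p where "p = F {i. i \<le> M \<and> even i}"
    define q where "q = F {i. i \<le> M \<and> odd i}"
    have homF: "hom_poly2 k (F S)" if "S \<subseteq> {..M}" for S
    proof -
      have "finite S" using that finite_subset by blast
      moreover have "\<And>i. i \<in> S \<Longrightarrow> e i \<le> k" using G that by auto
      ultimately show ?thesis unfolding F_def by (rule hom_sum)
    qed
    have hp: "hom_poly2 k p" unfolding p_def by (rule homF) auto
    have hq: "hom_poly2 k q" unfolding q_def by (rule homF) auto
    have bounds: "sqrt \<eta> \<le> norm2 (p z1 z2) (q z1 z2) \<and> norm2 (p z1 z2) (q z1 z2) \<le> 1"
      if n1: "norm2 z1 z2 = 1" for z1 z2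
    proof -
      define r1 where "r1 = cmod z1"
      define r2 where "r2 = cmod z2"
      have rr: "r1^2 + r2^2 = 1" using n1 by (simp add: norm2_def r1_def r2_def)
      have r10: "0 \<le> r1" and r20: "0 \<le> r2" by (auto simp: r1_def r2_def)
      have r11: "r1 \<le> 1"
      proof -
        have "r1^2 \<le> 1" using rr zero_le_power2[of r2] by linarith
        then show ?thesis using r10 by (simp add: power_le_one_iff)
      qed
      define \<phi> where "\<phi> = arcsin r1"
      have sphi: "sin \<phi> = r1" using r10 r11 by (simp add: \<phi>_def)
      have cphi: "cos \<phi> = r2"
      proof -
        have "cos \<phi> = sqrt (1 - r1^2)" using r10 r11 by (simp add: \<phi>_def cos_arcsin)
        also have "1 - r1^2 = r2^2" using rr by simp
        finally show ?thesis using r20 by simp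
      qed
      have ph0: "0 \<le> \<phi>" using r10 r11 arcsin_le_mono[of 0 r1] by (simp add: \<phi>_def)
      have ph1: "\<phi> \<le> pi/2" using r10 r11 arcsin_ubound[of r1] by (simp add: \<phi>_def)
      obtain c where cM: "c \<le> M" and cmain: "\<bar>th c - \<phi>\<bar> \<le> (31/60) * \<delta>"
        and csin: "(1/3) * sin (th c) \<le> sin \<phi>" and ccos: "(1/3) * cos (th c) \<le> cos \<phi>"
        and cfar: "\<And>i. i \<le> M \<Longrightarrow> (real (ndist i c) - 31/60) * \<delta> \<le> \<bar>th i - \<phi>\<bar>"
      proof (rule select[of \<delta> M th \<phi>])
        show "\<delta> > 0" by (rule P(2))
        show "\<delta> \<le> 1/10" by (rule P(5))
        show "real M * \<delta> = pi/2" by (rule Md)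
        show "\<And>i. i \<le> M \<Longrightarrow> 0 \<le> th i \<and> th i \<le> pi/2 \<and> \<bar>th i - real i * \<delta>\<bar> \<le> \<delta>/60" using G by blast
        show "th 0 = 0" using G[of 0] by simp
        show "th M = pi/2" using G[of M] by simp
      qed (use ph0 ph1 in auto)
      define t where "t i = (sin \<phi>)^(e i) * (cos \<phi>)^(k - e i) / ((sin (th i))^(e i) * (cos (th i))^(k - e i))" for i
      have TB: "0 \<le> t i \<and> t i \<le> exp (-(real k/3) * (th i - \<phi>)^2)" if "i \<le> M" for i
        using term_bounds(1,2)[of "e i" k "th i" \<phi>] G[OF that] ph0 ph1 by (simp add: t_def)
      have tcl: "exp (-2 * real k * (th c - \<phi>)^2) \<le> t c"
        using term_bounds(3)[of "e c" k "th c" \<phi>] G[OF cM] ph0 ph1 csin ccos by (simp add: t_def)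
      have tnn: "\<And>i. i \<le> M \<Longrightarrow> 0 \<le> t i" using TB by blast
      have tup: "\<And>i. i \<le> M \<Longrightarrow> t i \<le> exp (-(real k/3) * (th i - \<phi>)^2)" using TB by blast
      have s100: "100 \<le> s" using P(3) by (simp add: s_def)
      note SU = sums[where s=s and k=k and \<delta>=\<delta> and M=M and c=c and t=t and \<theta>=th and \<phi>=\<phi>,
          OF s_def s100 P(2) cM tnn tup cfar cmain tcl]
      have S1: "exp (-(27/50) * s) \<le> t c" using SU by blast
      have S2: "(\<Sum>i\<in>{i. i \<le> M \<and> i \<noteq> c \<and> even i = even c}. t i) \<le> (1/2) * exp (-(27/50) * s)"
        using SU by blast
      have S3: "(\<Sum>i\<in>{..M}. t i) \<le> 4" using SU by blast
      have tn: "norm (complex_of_real (coef i / 6) * z1^(e i) * z2^(k - e i)) = t i / 6" if "i \<le> M" for i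
      proof -
        have "0 \<le> (sin (th i))^(e i) * (cos (th i))^(k - e i)"
          using G[OF that] pi_gt_zero by (intro mult_nonneg_nonneg zero_le_power sin_ge_zero cos_ge_zero) auto
        then have "0 \<le> coef i" by (simp add: coef_def)
        have "norm (complex_of_real (coef i / 6) * z1^(e i) * z2^(k - e i)) = \<bar>coef i / 6\<bar> * r1^(e i) * r2^(k - e i)"
          by (simp only: norm_mult norm_power norm_of_real r1_def r2_def)
        also have "\<dots> = coef i / 6 * r1^(e i) * r2^(k - e i)" using \<open>0 \<le> coef i\<close> by simp
        also have "\<dots> = t i / 6" by (simp add: t_def coef_def sphi cphi)
        finally show ?thesis .
      qed
      have upper: "norm (F S z1 z2) \<le> 4/6" if "S \<subseteq> {..M}" for S
      proof -
        have "norm (F S z1 z2) \<le> (\<Sum>i\<in>S. norm (complex_of_real (coef i / 6) * z1^(e i) * z2^(k - e i)))"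
          unfolding F_def by (rule norm_sum)
        also have "\<dots> = (\<Sum>i\<in>S. t i / 6)" using that tn by (intro sum.cong) auto
        also have "\<dots> \<le> (\<Sum>i\<in>{..M}. t i / 6)"
          using that TB by (intro sum_mono2) auto
        also have "\<dots> = (\<Sum>i\<in>{..M}. t i) / 6" by (simp add: sum_divide_distrib)
        also have "\<dots> \<le> 4/6" using S3 by simp
        finally show ?thesis .
      qed
      define Sc where "Sc = {i. i \<le> M \<and> even i = even c}"
      have lower: "exp (-216) / 12 \<le> norm (F Sc z1 z2)"
      proof -
        have cS: "c \<in> Sc" using cM by (simp add: Sc_def)
        have finS: "finite Sc" by (simp add: Sc_def)
        have rem: "Sc - {c} = {i. i \<le> M \<and> i \<noteq> c \<and> even i = even c}" by (auto simp: Sc_def)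
        define a where "a = complex_of_real (coef c / 6) * z1^(e c) * z2^(k - e c)"
        define b where "b = (\<Sum>i\<in>Sc - {c}. complex_of_real (coef i / 6) * z1^(e i) * z2^(k - e i))"
        have Fab: "F Sc z1 z2 = a + b" unfolding F_def a_def b_def using sum.remove[OF finS cS] by simp
        have na: "norm a = t c / 6" unfolding a_def by (rule tn[OF cM])
        have "norm b \<le> (\<Sum>i\<in>Sc - {c}. norm (complex_of_real (coef i / 6) * z1^(e i) * z2^(k - e i)))"
          unfolding b_def by (rule norm_sum)
        also have "\<dots> = (\<Sum>i\<in>Sc - {c}. t i / 6)" using tn by (intro sum.cong) (auto simp: Sc_def)
        also have "\<dots> = (\<Sum>i\<in>Sc - {c}. t i) / 6" by (simp add: sum_divide_distrib)
        also have "\<dots> \<le> ((1/2) * exp (-(27/50) * s)) / 6" unfolding rem using S2 by simp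
        finally have nb: "norm b \<le> ((1/2) * exp (-(27/50) * s)) / 6" .
        have "norm a \<le> norm (a + b) + norm b" using norm_triangle_ineq4[of "a + b" b] by simp
        then have "t c / 6 - ((1/2) * exp (-(27/50) * s)) / 6 \<le> norm (F Sc z1 z2)" unfolding Fab using na nb by linarith
        moreover have "exp (-(27/50) * s) / 12 \<le> t c / 6 - ((1/2) * exp (-(27/50) * s)) / 6" using S1 by simp
        moreover have "exp (-216) \<le> exp (-(27/50) * s)" using P(4) by (simp add: s_def)
        ultimately show ?thesis by linarith
      qed
      have np: "norm (p z1 z2) \<le> 4/6" unfolding p_def by (rule upper) auto
      have nq: "norm (q z1 z2) \<le> 4/6" unfolding q_def by (rule upper) auto
      have "(norm (p z1 z2))^2 + (norm (q z1 z2))^2 \<le> (4/6)^2 + (4/6)^2"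
        by (intro add_mono power_mono np nq) auto
      also have "\<dots> \<le> 1" by (simp add: power2_eq_square)
      finally have "(norm (p z1 z2))^2 + (norm (q z1 z2))^2 \<le> 1" .
      then have up: "norm2 (p z1 z2) (q z1 z2) \<le> 1" by (simp add: norm2_def)
      have "exp (-216) / 12 \<le> norm (p z1 z2) \<or> exp (-216) / 12 \<le> norm (q z1 z2)"
      proof (cases "even c")
        case True
        then have "Sc = {i. i \<le> M \<and> even i}" by (auto simp: Sc_def)
        then show ?thesis using lower by (simp add: p_def)
      next
        case False
        then have "Sc = {i. i \<le> M \<and> odd i}" by (auto simp: Sc_def)
        then show ?thesis using lower by (simp add: q_def)
      qed
      moreover have "norm (p z1 z2) \<le> norm2 (p z1 z2) (q z1 z2)" "norm (q z1 z2) \<le> norm2 (p z1 z2) (q z1 z2)"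
        unfolding norm2_def by (auto intro: real_le_rsqrt)
      ultimately have "exp (-216) / 12 \<le> norm2 (p z1 z2) (q z1 z2)" by linarith
      then show ?thesis using up sq by simp
    qed
    show ?thesis using hp hq bounds by blast
  qed
  show ?thesis using eta0 eta1 main by blast
qed

end
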